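(* Fix $L>0$ and $0\le\bar h<h$ (and lane length $d>0$). Then for every $\bar\alpha\in[0,1]$ and every $n\ge1$, $$\frac{n\,c^{UB}(\bar\alpha)}{n\,c(\bar\alpha)}\;\le\;2\,\frac{L+h-\sqrt{(L+h)(L+\bar h)}}{h-\bar h}\;\le\;2,$$ and $$\frac{n\,c^{UB}(\bar\alpha)}{C^*_n(\bar\alpha)}\;\le\;\frac{2n(L+h)}{(2n-1)(L+h)+\sqrt{(L+h)(L+\bar h)}}\;\le\;\frac{2n}{2n-1},$$ where $C^*_n(\bar\alpha)=\max\{C(\boldsymbol{\alpha}):\boldsymbol{\alpha}\in[0,1]^n,\ G(\boldsymbol{\alpha})=0\}$. (Here $n\,c^{UB}(\bar\alpha)$ is the common total upper-bound capacity of every feasible $\boldsymbol\beta$, i.e. $C^{UB}(\boldsymbol\beta^* )$, and $n\,c(\bar\alpha)$ is the worst-case total capacity $C(\boldsymbol\alpha_* )$; thus the first inequality bounds the price of negligence $\Lambda$ and the second bounds the price of no control $\Gamma$.)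
   Context: Model of a road with $n\ge1$ parallel lanes of common length $d>0$. Vehicles have length $L>0$. A vehicle keeps a headway (space gap) $\bar h$ to the vehicle in front of it if both it and the vehicle in front are autonomous, and headway $h$ otherwise, where $0\le \bar h<h$. Set $k_1=(L+h)/d$ and $k_2=(h-\bar h)/d$. The capacity of a lane with autonomy level $\alpha\in[0,1]$ (vehicle types i.i.d. Bernoulli with probability $\alpha$ of being autonomous) is $c(\alpha)=\frac{1}{k_1-k_2\alpha^2}$, and the upper-bound capacity (all autonomous vehicles in the lane platooned together) is $c^{UB}(\beta)=\frac{1}{k_1-k_2\beta}$. Let $\bar\alpha\in[0,1]$ be the overall fraction of autonomous vehicles on the road. For $\boldsymbol{\alpha}\in[0,1]^n$ let $C(\boldsymbol{\alpha})=\sum_{i=1}^n c(\alpha_i)$ and $G(\boldsymbol{\alpha})=\sum_{i=1}^n(\alpha_i-\bar\alpha)c(\alpha_i)$. The price of negligence $\Lambda$ is the supremum over $\bar\alpha,n$ of the ratio of the optimal upper-bound total capacity $C^{UB}(\boldsymbol\beta^* )$ to the minimum of $C$ under $G=0$; the price of no control $\Gamma$ is the supremum over $\bar\alpha,n$ of the ratio of $C^{UB}(\boldsymbol\beta^* )$ to the maximum of $C$ under $G=0$. *)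

theory Defs
  imports Complex_Main
begin

definition k1 :: "real \<Rightarrow> real \<Rightarrow> real \<Rightarrow> real" where
  "k1 L h d = (L + h) / d"

definition k2 :: "real \<Rightarrow> real \<Rightarrow> real \<Rightarrow> real" where
  "k2 h hb d = (h - hb) / d"

text \<open>Lane capacity with autonomy level a (random ordering).\<close>
definition cap :: "real \<Rightarrow> real \<Rightarrow> real \<Rightarrow> real \<Rightarrow> real \<Rightarrow> real" where
  "cap L h hb d a = 1 / (k1 L h d - k2 h hb d * a\<^sup>2)"

text \<open>Upper-bound lane capacity (all autonomous vehicles platooned).\<close>
definition capUB :: "real \<Rightarrow> real \<Rightarrow> real \<Rightarrow> real \<Rightarrow> real \<Rightarrow> real" where
  "capUB L h hb d b = 1 / (k1 L h d - k2 h hb d * b)"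

text \<open>Vectors in [0,1]^n are represented as functions nat => real, only indices i < n matter.\<close>
definition totC :: "real \<Rightarrow> real \<Rightarrow> real \<Rightarrow> real \<Rightarrow> nat \<Rightarrow> (nat \<Rightarrow> real) \<Rightarrow> real" where
  "totC L h hb d n a = (\<Sum>i<n. cap L h hb d (a i))"

definition Gfun :: "real \<Rightarrow> real \<Rightarrow> real \<Rightarrow> real \<Rightarrow> real \<Rightarrow> nat \<Rightarrow> (nat \<Rightarrow> real) \<Rightarrow> real" where
  "Gfun L h hb d abar n a = (\<Sum>i<n. (a i - abar) * cap L h hb d (a i))"

definition feasible :: "real \<Rightarrow> real \<Rightarrow> real \<Rightarrow> real \<Rightarrow> real \<Rightarrow> nat \<Rightarrow> (nat \<Rightarrow> real) \<Rightarrow> bool" where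
  "feasible L h hb d abar n a \<longleftrightarrow>
     (\<forall>i<n. 0 \<le> a i \<and> a i \<le> 1) \<and> Gfun L h hb d abar n a = 0"

text \<open>C*_n(abar) = max of C over feasible vectors (written as a supremum; the max is attained by compactness).\<close>
definition Cstar :: "real \<Rightarrow> real \<Rightarrow> real \<Rightarrow> real \<Rightarrow> real \<Rightarrow> nat \<Rightarrow> real" where
  "Cstar L h hb d abar n = Sup {totC L h hb d n a | a. feasible L h hb d abar n a}"

end

theory Submission
  imports Defs
begin

lemma cap_eq: "d > 0 \<Longrightarrow> cap L h hb d a = d / ((L+h) - (h-hb) * a\<^sup>2)"
proof -
  assume "d > 0"
  hence "k1 L h d - k2 h hb d * a\<^sup>2 = ((L+h) - (h-hb) * a\<^sup>2) / d"
    by (simp add: k1_def k2_def field_simps)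
  thus ?thesis by (simp add: cap_def)
qed

lemma capUB_eq: "d > 0 \<Longrightarrow> capUB L h hb d a = d / ((L+h) - (h-hb) * a)"
proof -
  assume "d > 0"
  hence "k1 L h d - k2 h hb d * a = ((L+h) - (h-hb) * a) / d"
    by (simp add: k1_def k2_def field_simps)
  thus ?thesis by (simp add: capUB_def)
qed

lemma denom_pos:
  fixes A B D x :: real
  assumes "B > 0" "D > 0" "A = B + D" "0 \<le> x" "x \<le> 1"
  shows "A - D * x\<^sup>2 \<ge> B" "A - D * x \<ge> B"
proof -
  have "x\<^sup>2 \<le> 1" using assms by (simp add: power_le_one)
  then show "A - D * x\<^sup>2 \<ge> B" using assms by (smt (verit) mult_left_le)
  show "A - D * x \<ge> B" using assms by (smt (verit) mult_left_le)
qed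

lemma key:
  fixes A B D x s :: real
  assumes "B > 0" "D > 0" "A = B + D" "0 \<le> x" "x \<le> 1" "s\<^sup>2 = A * B" "s \<ge> 0"
  shows "(A - D * x\<^sup>2) * (A + s) \<le> 2 * A * (A - D * x)"
proof -
  define t where "t = A - D * x"
  have e: "D * (A - D * x\<^sup>2) = 2*A*t - t\<^sup>2 - A*B"
    unfolding t_def using assms(3) by (simp add: power2_eq_square algebra_simps)
  have "0 \<le> (t - s)\<^sup>2" by simp
  hence "D * (A - D * x\<^sup>2) \<le> 2 * (A - s) * t"
    using e assms(6) by (simp add: power2_eq_square algebra_simps)
  hence "D * (A - D * x\<^sup>2) * (A + s) \<le> 2 * (A - s) * t * (A + s)"
    using assms by (intro mult_right_mono) auto
  also have "\<dots> = 2 * t * ((A - s) * (A + s))" by (simp add: algebra_simps)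
  also have "(A - s) * (A + s) = A * D"
    using assms(3,6) by (simp add: power2_eq_square algebra_simps)
  also have "2 * t * (A * D) = 2 * A * D * t" by simp
  finally have "D * ((A - D * x\<^sup>2) * (A + s)) \<le> D * (2 * A * t)"
    by (simp add: algebra_simps)
  thus ?thesis using assms(2) t_def by simp
qed

lemma lane_identity:
  fixes A D d x abar c :: real
  assumes "D > 0" "c * (A - D * x\<^sup>2) = d"
  shows "(x - abar) * c = ((A - D*abar) * c - d) / D + x * (1 - x) * c"
proof -
  have "((A - D*abar) * c - d) = D * (x\<^sup>2 * c - abar * c)"
    using assms(2) by (simp add: algebra_simps power2_eq_square)
  hence "((A - D*abar) * c - d) / D = x\<^sup>2 * c - abar * c" using assms(1) by simp
  thus ?thesis by (simp add: algebra_simps power2_eq_square)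
qed

theorem theorem3:
  fixes L h hb d abar :: real and n :: nat
  assumes "L > 0" and "0 \<le> hb" and "hb < h" and "d > 0"
    and "0 \<le> abar" and "abar \<le> 1" and "n \<ge> 1"
  shows "(real n * capUB L h hb d abar) / (real n * cap L h hb d abar)
           \<le> 2 * (L + h - sqrt ((L + h) * (L + hb))) / (h - hb)
       \<and> 2 * (L + h - sqrt ((L + h) * (L + hb))) / (h - hb) \<le> 2
       \<and> (real n * capUB L h hb d abar) / Cstar L h hb d abar n
           \<le> 2 * real n * (L + h) / ((2 * real n - 1) * (L + h) + sqrt ((L + h) * (L + hb)))
       \<and> 2 * real n * (L + h) / ((2 * real n - 1) * (L + h) + sqrt ((L + h) * (L + hb)))
           \<le> 2 * real n / (2 * real n - 1)"
proof -
  define A where "A = L + h"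
  define B where "B = L + hb"
  define D where "D = h - hb"
  define s where "s = sqrt (A * B)"
  have B0: "B > 0" and D0: "D > 0" and AB: "A = B + D"
    using assms by (auto simp: A_def B_def D_def)
  have A0: "A > 0" using B0 D0 AB by simp
  have s2: "s\<^sup>2 = A * B" using A0 B0 by (simp add: s_def)
  have s0: "s \<ge> 0" using A0 B0 by (simp add: s_def)
  have sB: "B \<le> s"
    unfolding s_def using A0 B0 AB D0
    by (intro real_le_rsqrt) (simp add: power2_eq_square)
  have sA: "s \<le> A"
  proof -
    have "sqrt (A*B) \<le> sqrt (A*A)" using A0 AB D0 by (intro real_sqrt_le_mono) simp
    thus ?thesis using A0 by (simp add: s_def)
  qed
  have capE: "\<And>a. cap L h hb d a = d / (A - D * a\<^sup>2)"
    using assms(4) by (simp add: cap_eq A_def D_def)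
  have capUBE: "\<And>a. capUB L h hb d a = d / (A - D * a)"
    using assms(4) by (simp add: capUB_eq A_def D_def)
  have AmDs: "(A - s) * (A + s) = A * D" using s2 AB by (simp add: power2_eq_square algebra_simps)
  have fmax: "2 * (A - s) / D = 2 * A / (A + s)"
    using D0 A0 s0 AmDs by (simp add: field_simps)
  have n0: "real n \<ge> 1" using assms(7) by simp
  define u0 where "u0 = A - D * abar"
  have u0B: "u0 \<ge> B" unfolding u0_def using denom_pos(2)[OF B0 D0 AB assms(5,6)] .
  have P1: "(real n * capUB L h hb d abar) / (real n * cap L h hb d abar) \<le> 2 * (A - s) / D"
  proof -
    have p1: "A - D * abar\<^sup>2 \<ge> B" "A - D * abar \<ge> B"
      using denom_pos[OF B0 D0 AB assms(5,6)] by auto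
    have "(real n * capUB L h hb d abar) / (real n * cap L h hb d abar)
        = (A - D * abar\<^sup>2) / (A - D * abar)"
      using n0 p1 B0 assms(4) by (simp add: capE capUBE field_simps)
    also have "\<dots> \<le> 2 * A / (A + s)"
      using key[OF B0 D0 AB assms(5,6) s2 s0] p1 B0 A0 s0
      by (simp add: field_simps)
    finally show ?thesis using fmax by simp
  qed
  have P2: "2 * (A - s) / D \<le> 2"
    using sB AB D0 by (simp add: field_simps)
  have P4: "2 * real n * A / ((2 * real n - 1) * A + s) \<le> 2 * real n / (2 * real n - 1)"
  proof -
    have "(2 * real n - 1) * A \<le> (2 * real n - 1) * A + s" using s0 by simp
    moreover have pp: "(2 * real n - 1) * A > 0" using n0 A0 by simp
    moreover have "(2 * real n - 1) * A + s > 0" using pp s0 by linarith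
    ultimately have "2 * real n * A / ((2 * real n - 1) * A + s) \<le> 2 * real n * A / ((2 * real n - 1) * A)"
      using n0 A0 by (intro divide_left_mono) (auto intro: mult_pos_pos)
    also have "\<dots> = 2 * real n / (2 * real n - 1)" using A0 by simp
    finally show ?thesis .
  qed
  define al where "al = (\<lambda>t::real. \<lambda>i::nat. max 0 (min 1 (t - real i)))"
  have al01: "0 \<le> al t i \<and> al t i \<le> 1" for t i by (simp add: al_def)
  have denpos: "A - D * (al t i)\<^sup>2 > 0" for t i
    using denom_pos(1)[OF B0 D0 AB, of "al t i"] al01[of t i] B0 by auto
  define Gt where "Gt = (\<lambda>t. Gfun L h hb d abar n (al t))"
  have Gt_eq: "Gt t = (\<Sum>i<n. (al t i - abar) * (d / (A - D * (al t i)\<^sup>2)))" for t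
    by (simp add: Gt_def Gfun_def capE)
  have cont: "continuous_on {0..real n} Gt"
  proof -
    have "continuous_on {0..real n} (\<lambda>t. \<Sum>i<n. (al t i - abar) * (d / (A - D * (al t i)\<^sup>2)))"
      unfolding al_def
      by (intro continuous_intros) (use denpos[unfolded al_def] in \<open>auto simp: less_irrefl\<close>)
    thus ?thesis using Gt_eq by simp
  qed
  have G0: "Gt 0 \<le> 0"
  proof -
    have "Gt 0 = (\<Sum>i<n. (0 - abar) * (d / A))" unfolding Gt_eq by (simp add: al_def)
    also have "\<dots> \<le> 0" using assms(4,5) A0
      by (intro sum_nonpos) (simp add: mult_nonneg_nonpos)
    finally show ?thesis .
  qed
  have Gn: "Gt (real n) \<ge> 0"
  proof -
    have "Gt (real n) = (\<Sum>i<n. (1 - abar) * (d / (A - D)))" unfolding Gt_eq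
      by (intro sum.cong) (auto simp: al_def)
    also have "\<dots> \<ge> 0" using assms(4,6) AB B0
      by (intro sum_nonneg) simp
    finally show ?thesis .
  qed
  obtain t where t: "0 \<le> t" "t \<le> real n" "Gt t = 0"
    using IVT'[of Gt 0 0 "real n", OF G0 Gn _ cont] by auto
  define a where "a = al t"
  have feas: "feasible L h hb d abar n a"
    using t al01 unfolding feasible_def a_def Gt_def by auto
  define q where "q = (\<lambda>x. x * (1 - x) * (d / (A - D * x\<^sup>2)))"
  define Q where "Q = d * (A - s) / (2 * A * D)"
  have qQ: "q x \<le> Q" if "0 \<le> x" "x \<le> 1" for x
  proof -
    have dp: "A - D * x\<^sup>2 \<ge> B" using denom_pos(1)[OF B0 D0 AB that] .
    have k: "(A - D * x\<^sup>2) * (A + s) \<le> 2 * A * (A - D * x)" using key[OF B0 D0 AB that s2 s0] .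
    have "2 * A * D * (x * (1 - x)) \<le> (A - s) * (A - D * x\<^sup>2)"
      using k by (simp add: algebra_simps power2_eq_square)
    hence "2 * A * D * (x * (1 - x)) * d \<le> (A - s) * (A - D * x\<^sup>2) * d"
      using assms(4) by (intro mult_right_mono) auto
    thus ?thesis unfolding q_def Q_def using dp B0 A0 D0
      by (simp add: field_simps)
  qed
  have q01: "q 0 = 0" "q 1 = 0" by (auto simp: q_def)
  have Q0: "Q \<ge> 0" unfolding Q_def using sA A0 D0 assms(4) by simp
  have sumq: "(\<Sum>i<n. q (a i)) \<le> Q"
  proof -
    define S where "S = {i. i < n \<and> 0 < a i \<and> a i < 1}"
    have "(\<Sum>i<n. q (a i)) = (\<Sum>i\<in>S. q (a i))"
    proof (rule sum.mono_neutral_cong_right)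
      show "\<forall>i\<in>{..<n} - S. q (a i) = 0"
      proof
        fix i assume "i \<in> {..<n} - S"
        hence "a i = 0 \<or> a i = 1" using al01[of t i] unfolding S_def a_def by auto
        thus "q (a i) = 0" using q01 by auto
      qed
    qed (auto simp: S_def)
    also have "\<dots> \<le> of_nat (card S) * Q"
      using qQ al01 unfolding a_def by (intro sum_bounded_above) auto
    also have "\<dots> \<le> Q"
    proof -
      have "S \<subseteq> {nat \<lfloor>t\<rfloor>}"
      proof
        fix i assume "i \<in> S"
        hence "0 < t - real i" "t - real i < 1" unfolding S_def a_def al_def
          by (auto simp: max_def min_def split: if_splits)
        hence "\<lfloor>t\<rfloor> = int i" by (simp add: floor_eq_iff)
        thus "i \<in> {nat \<lfloor>t\<rfloor>}" by simp
      qed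
      hence "card S \<le> 1" using card_mono[of "{nat \<lfloor>t\<rfloor>}" S] by simp
      hence "real (card S) \<le> 1" by simp
      thus ?thesis using Q0 mult_right_mono[of "real (card S)" 1 Q] by simp
    qed
    finally show ?thesis .
  qed
  have Cval: "u0 * totC L h hb d n a = real n * d - D * (\<Sum>i<n. q (a i))"
  proof -
    have li: "(a i - abar) * cap L h hb d (a i)
       = (u0 * cap L h hb d (a i) - d) / D + q (a i)" for i
      unfolding u0_def q_def capE
      by (rule lane_identity[OF D0]) (use denpos[of t i] in \<open>simp add: a_def\<close>)
    have "0 = Gfun L h hb d abar n a" using feas by (simp add: feasible_def)
    also have "\<dots> = (\<Sum>i<n. (u0 * cap L h hb d (a i) - d) / D + q (a i))"
      unfolding Gfun_def using li by simp
    also have "\<dots> = (u0 * totC L h hb d n a - real n * d) / D + (\<Sum>i<n. q (a i))"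
      by (simp add: sum.distrib totC_def sum_divide_distrib[symmetric] sum_subtractf
          sum_distrib_left)
    finally show ?thesis using D0 by (simp add: field_simps)
  qed
  have Clow: "u0 * totC L h hb d n a \<ge> d * ((2 * real n - 1) * A + s) / (2 * A)"
  proof -
    have "D * (\<Sum>i<n. q (a i)) \<le> D * Q" using sumq D0 by simp
    also have "D * Q = d * (A - s) / (2 * A)" using D0 by (simp add: Q_def)
    finally have "u0 * totC L h hb d n a \<ge> real n * d - d * (A - s) / (2 * A)"
      using Cval by simp
    also have "real n * d - d * (A - s) / (2 * A) = d * ((2 * real n - 1) * A + s) / (2 * A)"
      using A0 by (simp add: field_simps)
    finally show ?thesis .
  qed
  have bdd: "bdd_above {totC L h hb d n a | a. feasible L h hb d abar n a}"
  proof (rule bdd_aboveI)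
    fix x assume "x \<in> {totC L h hb d n a | a. feasible L h hb d abar n a}"
    then obtain b where x: "x = totC L h hb d n b" and fb: "feasible L h hb d abar n b" by auto
    have "x \<le> (\<Sum>i<n. d / B)" unfolding x totC_def
    proof (rule sum_mono)
      fix i assume "i \<in> {..<n}"
      hence "0 \<le> b i" "b i \<le> 1" using fb by (auto simp: feasible_def)
      hence "A - D * (b i)\<^sup>2 \<ge> B" using denom_pos(1)[OF B0 D0 AB] by auto
      thus "cap L h hb d (b i) \<le> d / B" unfolding capE
        using B0 assms(4) by (intro divide_left_mono) auto
    qed
    thus "x \<le> real n * (d / B)" by simp
  qed
  have Cs: "totC L h hb d n a \<le> Cstar L h hb d abar n"
    unfolding Cstar_def using feas bdd by (intro cSup_upper) auto
  have u0p: "u0 > 0" using u0B B0 by simp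
  have dpos: "(2 * real n - 1) * A + s > 0"
  proof -
    have "(2 * real n - 1) * A > 0" using n0 A0 by simp
    thus ?thesis using s0 by linarith
  qed
  have lowpos: "d * ((2 * real n - 1) * A + s) / (2 * A) > 0"
    using assms(4) A0 dpos by (intro divide_pos_pos mult_pos_pos) auto
  have Cs2: "u0 * Cstar L h hb d abar n \<ge> d * ((2 * real n - 1) * A + s) / (2 * A)"
    using Clow Cs u0p by (smt (verit) mult_left_mono)
  have P3: "(real n * capUB L h hb d abar) / Cstar L h hb d abar n
      \<le> 2 * real n * A / ((2 * real n - 1) * A + s)"
  proof -
    have "(real n * capUB L h hb d abar) / Cstar L h hb d abar n
        = real n * d / (u0 * Cstar L h hb d abar n)"
      by (simp add: capUBE u0_def)
    also have "\<dots> \<le> real n * d / (d * ((2 * real n - 1) * A + s) / (2 * A))"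
    proof (rule divide_left_mono)
      show "0 < u0 * Cstar L h hb d abar n * (d * ((2 * real n - 1) * A + s) / (2 * A))"
      proof (rule mult_pos_pos)
        show "0 < u0 * Cstar L h hb d abar n" using Cs2 lowpos by linarith
      qed (use lowpos in auto)
    qed (use Cs2 assms(4) in auto)
    also have "\<dots> = 2 * real n * A / ((2 * real n - 1) * A + s)"
    proof -
      define X where "X = (2 * real n - 1) * A + s"
      have "X \<noteq> 0" using dpos X_def by simp
      thus ?thesis unfolding X_def[symmetric] using assms(4) A0 by (simp add: field_simps)
    qed
    finally show ?thesis .
  qed
  show ?thesis using P1 P2 P3 P4 unfolding A_def B_def D_def s_def by simp
qed

end
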